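(* In the setting of the context, let $\nu$ be a probability measure on $M$ with $$\int f_k\,d\nu=0,\qquad \int f_k^2\,d\nu=1,\qquad \int \Gamma(f_k)\,d\nu\le \lambda_k(\mu).$$ Then for all $g\in H^1(\nu)\cap E_{k-1}^{\perp}$, $$\left|\int\bigl(\lambda_k(\nu)\,f_k\, g-\Gamma(f_k,g)\bigr)\,d\nu\right|\le\Bigl[\lambda_k(\mu)-\lambda_k(\nu)+\sum_{i=1}^{k-1}\bigl(\lambda_k(\nu)-\lambda_i(\nu)\bigr)\,d(f_k,Sp_i(\nu)^\perp)^2\Bigr]^{1/2}\sqrt{\int\Gamma(g)\,d\nu}.$$
   Context: $L$ is a Markov generator on a state space $M$, reversible with respect to a probability measure $\mu$, with carré du champ operator $\Gamma(f,g)=\frac12\bigl(L(fg)-fLg-gLf\bigr)$, $\Gamma(f)=\Gamma(f,f)$. Let $0<\lambda_1(\mu)<\lambda_2(\mu)<\cdots$ be the eigenvalues of $-L$ counted without multiplicity, fix $k\ge1$, and let $f_k$ satisfy $-Lf_k=\lambda_k(\mu)f_k$, $\int f_k\,d\mu=0$, $\int f_k^2\,d\mu=1$. For a probability measure $\nu$ on $M$ define $H^1(\nu)=\{f\in L^2(\nu):\int f\,d\nu=0,\ \int\Gamma(f)\,d\nu<\infty\}$. Set $E_0=\{0\}$ and recursively, for $m\ge0$, with $\perp$ denoting orthogonal complement in $L^2(\nu)$: $$\lambda_{m+1}(\nu)=\inf_{f\in H^1(\nu)\cap E_m^\perp,\ f\neq 0}\frac{\int\Gamma(f)\,d\nu}{\int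 f^2\,d\nu},$$ $$Sp_{m+1}(\nu)=\Bigl\{f\in H^1(\nu)\cap E_m^\perp:\ \forall g\in H^1(\nu)\cap E_m^\perp,\ \int fg\,d\nu=\tfrac{1}{\lambda_{m+1}(\nu)}\int\Gamma(f,g)\,d\nu\Bigr\},$$ and $E_{m+1}=Sp_1(\nu)\oplus\cdots\oplus Sp_{m+1}(\nu)$. Write the $L^2(\nu)$-orthogonal projection of $f_k$ onto $E_{k-1}$ as $p_k^1+\dots+p_k^{k-1}$ with $p_k^i\in Sp_i(\nu)$, and define $d(f_k,Sp_i(\nu)^\perp)^2:=\int (p_k^i)^2\,d\nu$. *)

theory Defs
  imports "HOL-Probability.Probability"
begin

definition Gam :: "(('a \<Rightarrow> real) \<Rightarrow> ('a \<Rightarrow> real)) \<Rightarrow> ('a \<Rightarrow> real) \<Rightarrow> ('a \<Rightarrow> real) \<Rightarrow> 'a \<Rightarrow> real" where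
  "Gam L f g = (\<lambda>x. (L (\<lambda>y. f y * g y) x - f x * L g x - g x * L f x) / 2)"

definition markov_generator ::
  "('a \<Rightarrow> real) set \<Rightarrow> (('a \<Rightarrow> real) \<Rightarrow> ('a \<Rightarrow> real)) \<Rightarrow> 'a measure \<Rightarrow> bool" where
  "markov_generator D L \<mu> \<longleftrightarrow>
     prob_space \<mu> \<and>
     D \<subseteq> borel_measurable \<mu> \<and>
     (\<forall>c. (\<lambda>x. c) \<in> D) \<and>
     (\<forall>f\<in>D. \<forall>g\<in>D. (\<lambda>x. f x + g x) \<in> D \<and> (\<lambda>x. f x * g x) \<in> D) \<and>
     (\<forall>f\<in>D. \<forall>c. (\<lambda>x. c * f x) \<in> D) \<and>
     (\<forall>f\<in>D. L f \<in> D) \<and>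
     (\<forall>f\<in>D. \<forall>g\<in>D. \<forall>x\<in>space \<mu>. L (\<lambda>y. f y + g y) x = L f x + L g x) \<and>
     (\<forall>f\<in>D. \<forall>c. \<forall>x\<in>space \<mu>. L (\<lambda>y. c * f y) x = c * L f x) \<and>
     (\<forall>x\<in>space \<mu>. L (\<lambda>y. 1) x = 0) \<and>
     (\<forall>f\<in>D. \<forall>x\<in>space \<mu>. Gam L f f x \<ge> 0) \<and>
     (\<forall>f\<in>D. \<forall>g\<in>D. (\<integral>x. f x * L g x \<partial>\<mu>) = (\<integral>x. g x * L f x \<partial>\<mu>))"

definition is_eigenvalue ::
  "('a \<Rightarrow> real) set \<Rightarrow> (('a \<Rightarrow> real) \<Rightarrow> ('a \<Rightarrow> real)) \<Rightarrow> 'a measure \<Rightarrow> real \<Rightarrow> bool" where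
  "is_eigenvalue D L \<mu> l \<longleftrightarrow>
     (\<exists>f\<in>D. integrable \<mu> (\<lambda>x. (f x)\<^sup>2) \<and> (\<integral>x. (f x)\<^sup>2 \<partial>\<mu>) \<noteq> 0 \<and>
            (AE x in \<mu>. - L f x = l * f x))"

definition H1 ::
  "('a \<Rightarrow> real) set \<Rightarrow> (('a \<Rightarrow> real) \<Rightarrow> ('a \<Rightarrow> real)) \<Rightarrow> 'a measure \<Rightarrow> ('a \<Rightarrow> real) set" where
  "H1 D L \<nu> = {f \<in> D. f \<in> borel_measurable \<nu> \<and> integrable \<nu> (\<lambda>x. (f x)\<^sup>2) \<and>
                     (\<integral>x. f x \<partial>\<nu>) = 0 \<and> integrable \<nu> (Gam L f f)}"

definition orth :: "'a measure \<Rightarrow> ('a \<Rightarrow> real) set \<Rightarrow> ('a \<Rightarrow> real) set" where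
  "orth \<nu> E = {f. \<forall>e\<in>E. (\<integral>x. f x * e x \<partial>\<nu>) = 0}"

definition lam_next ::
  "('a \<Rightarrow> real) set \<Rightarrow> (('a \<Rightarrow> real) \<Rightarrow> ('a \<Rightarrow> real)) \<Rightarrow> 'a measure \<Rightarrow> ('a \<Rightarrow> real) set \<Rightarrow> real" where
  "lam_next D L \<nu> E = Inf {(\<integral>x. Gam L f f x \<partial>\<nu>) / (\<integral>x. (f x)\<^sup>2 \<partial>\<nu>) | f.
        f \<in> H1 D L \<nu> \<inter> orth \<nu> E \<and> (\<integral>x. (f x)\<^sup>2 \<partial>\<nu>) \<noteq> 0}"

definition Sp_next ::
  "('a \<Rightarrow> real) set \<Rightarrow> (('a \<Rightarrow> real) \<Rightarrow> ('a \<Rightarrow> real)) \<Rightarrow> 'a measure \<Rightarrow> ('a \<Rightarrow> real) set \<Rightarrow> ('a \<Rightarrow> real) set" where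
  "Sp_next D L \<nu> E = {f \<in> H1 D L \<nu> \<inter> orth \<nu> E. \<forall>g \<in> H1 D L \<nu> \<inter> orth \<nu> E.
        (\<integral>x. f x * g x \<partial>\<nu>) = (1 / lam_next D L \<nu> E) * (\<integral>x. Gam L f g x \<partial>\<nu>)}"

primrec Espace ::
  "('a \<Rightarrow> real) set \<Rightarrow> (('a \<Rightarrow> real) \<Rightarrow> ('a \<Rightarrow> real)) \<Rightarrow> 'a measure \<Rightarrow> nat \<Rightarrow> ('a \<Rightarrow> real) set" where
  "Espace D L \<nu> 0 = {(\<lambda>x. 0)}"
| "Espace D L \<nu> (Suc m) = {(\<lambda>x. e x + s x) | e s.
       e \<in> Espace D L \<nu> m \<and> s \<in> Sp_next D L \<nu> (Espace D L \<nu> m)}"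

text \<open>lambda_i(nu) and Sp_i(nu) for i >= 1.\<close>
definition lam_nu ::
  "('a \<Rightarrow> real) set \<Rightarrow> (('a \<Rightarrow> real) \<Rightarrow> ('a \<Rightarrow> real)) \<Rightarrow> 'a measure \<Rightarrow> nat \<Rightarrow> real" where
  "lam_nu D L \<nu> i = lam_next D L \<nu> (Espace D L \<nu> (i - 1))"

definition Sp ::
  "('a \<Rightarrow> real) set \<Rightarrow> (('a \<Rightarrow> real) \<Rightarrow> ('a \<Rightarrow> real)) \<Rightarrow> 'a measure \<Rightarrow> nat \<Rightarrow> ('a \<Rightarrow> real) set" where
  "Sp D L \<nu> i = Sp_next D L \<nu> (Espace D L \<nu> (i - 1))"

end

theory Submission
  imports Defs
begin

locale setting =
  fixes D :: "('a \<Rightarrow> real) set" and L :: "('a \<Rightarrow> real) \<Rightarrow> ('a \<Rightarrow> real)" and \<nu> :: "'a measure"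
  assumes prob: "prob_space \<nu>"
    and D_meas: "\<And>f. f \<in> D \<Longrightarrow> f \<in> borel_measurable \<nu>"
    and D_const: "\<And>c. (\<lambda>x. c) \<in> D"
    and D_add: "\<And>f g. f \<in> D \<Longrightarrow> g \<in> D \<Longrightarrow> (\<lambda>x. f x + g x) \<in> D"
    and D_mult: "\<And>f g. f \<in> D \<Longrightarrow> g \<in> D \<Longrightarrow> (\<lambda>x. f x * g x) \<in> D"
    and D_smult: "\<And>f c. f \<in> D \<Longrightarrow> (\<lambda>x. c * f x) \<in> D"
    and L_D: "\<And>f. f \<in> D \<Longrightarrow> L f \<in> D"
    and L_add: "\<And>f g x. f \<in> D \<Longrightarrow> g \<in> D \<Longrightarrow> x \<in> space \<nu> \<Longrightarrow> L (\<lambda>y. f y + g y) x = L f x + L g x"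
    and L_smult: "\<And>f c x. f \<in> D \<Longrightarrow> x \<in> space \<nu> \<Longrightarrow> L (\<lambda>y. c * f y) x = c * L f x"
    and L_one: "\<And>x. x \<in> space \<nu> \<Longrightarrow> L (\<lambda>y. 1) x = 0"
    and Gam_nonneg: "\<And>f x. f \<in> D \<Longrightarrow> x \<in> space \<nu> \<Longrightarrow> Gam L f f x \<ge> 0"
begin

lemma L_zero: "x \<in> space \<nu> \<Longrightarrow> L (\<lambda>y. 0) x = 0"
  using L_smult[of "\<lambda>y. 1" x 0] D_const L_one by simp

lemma Gam_sym: "Gam L f g = Gam L g f"
  unfolding Gam_def by (rule ext) (simp add: mult.commute algebra_simps)

lemma Gam_add_left:
  assumes "f \<in> D" "g \<in> D" "h \<in> D" "x \<in> space \<nu>"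
  shows "Gam L (\<lambda>x. f x + g x) h x = Gam L f h x + Gam L g h x"
proof -
  have e: "(\<lambda>y. (f y + g y) * h y) = (\<lambda>y. f y * h y + g y * h y)" by (simp add: algebra_simps)
  have "L (\<lambda>y. (f y + g y) * h y) x = L (\<lambda>y. f y * h y) x + L (\<lambda>y. g y * h y) x"
    unfolding e using assms by (intro L_add D_mult) auto
  moreover have "L (\<lambda>y. f y + g y) x = L f x + L g x" using assms L_add by auto
  ultimately show ?thesis unfolding Gam_def e by (simp add: field_simps)
qed

lemma Gam_smult_left:
  assumes "f \<in> D" "h \<in> D" "x \<in> space \<nu>"
  shows "Gam L (\<lambda>x. c * f x) h x = c * Gam L f h x"
proof -
  have e: "(\<lambda>y. (c * f y) * h y) = (\<lambda>y. c * (f y * h y))" by (simp add: algebra_simps)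
  have "L (\<lambda>y. (c * f y) * h y) x = c * L (\<lambda>y. f y * h y) x"
    unfolding e using assms by (intro L_smult D_mult) auto
  moreover have "L (\<lambda>y. c * f y) x = c * L f x" using assms L_smult by auto
  ultimately show ?thesis unfolding Gam_def e by (simp add: field_simps)
qed

lemma Gam_zero_left:
  assumes "x \<in> space \<nu>"
  shows "Gam L (\<lambda>x. 0) h x = 0"
  using assms L_zero unfolding Gam_def by simp

lemma Gam_add_right:
  assumes "f \<in> D" "g \<in> D" "h \<in> D" "x \<in> space \<nu>"
  shows "Gam L h (\<lambda>x. f x + g x) x = Gam L h f x + Gam L h g x"
  using Gam_add_left[OF assms] Gam_sym by metis

lemma Gam_smult_right:
  assumes "f \<in> D" "h \<in> D" "x \<in> space \<nu>"
  shows "Gam L h (\<lambda>x. c * f x) x = c * Gam L h f x"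
  using Gam_smult_left[OF assms] Gam_sym by metis

lemma Gam_bound:
  assumes "f \<in> D" "g \<in> D" "x \<in> space \<nu>"
  shows "\<bar>Gam L f g x\<bar> \<le> (Gam L f f x + Gam L g g x) / 2"
proof -
  let ?p = "\<lambda>x. f x + g x" and ?m = "\<lambda>x. f x + (-1) * g x"
  have Dp: "?p \<in> D" and Dm: "?m \<in> D" and Dg': "(\<lambda>x. (-1) * g x) \<in> D"
    by (intro D_add D_smult assms)+
  have "Gam L ?p ?p x = Gam L f ?p x + Gam L g ?p x" using Gam_add_left assms Dp by blast
  also have "\<dots> = Gam L f f x + Gam L f g x + (Gam L g f x + Gam L g g x)"
    using Gam_add_right assms by simp
  finally have 1: "Gam L ?p ?p x = Gam L f f x + 2 * Gam L f g x + Gam L g g x"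
    using Gam_sym by (metis mult_2 add.assoc add.commute)
  have "Gam L ?m ?m x = Gam L f ?m x + Gam L (\<lambda>x. (-1) * g x) ?m x"
    using Gam_add_left[OF assms(1) Dg' Dm assms(3)] by simp
  also have "\<dots> = Gam L f ?m x + (-1) * Gam L g ?m x"
    using Gam_smult_left[OF assms(2) Dm assms(3), of "-1"] by simp
  also have "Gam L f ?m x = Gam L f f x + Gam L f (\<lambda>x. (-1) * g x) x"
    using Gam_add_right[OF assms(1) Dg' assms(1) assms(3)] by simp
  also have "Gam L g ?m x = Gam L g f x + Gam L g (\<lambda>x. (-1) * g x) x"
    using Gam_add_right[OF assms(1) Dg' assms(2) assms(3)] by simp
  finally have 2: "Gam L ?m ?m x = Gam L f f x - 2 * Gam L f g x + Gam L g g x"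
    using Gam_smult_right[OF assms(2) assms(1) assms(3), where c="-1"] Gam_smult_right[OF assms(2) assms(2) assms(3), where c="-1"] Gam_sym[of g f] by (simp add: algebra_simps)
  have "Gam L ?p ?p x \<ge> 0" "Gam L ?m ?m x \<ge> 0" using Gam_nonneg Dp Dm assms by auto
  then have a: "0 \<le> Gam L f f x + 2 * Gam L f g x + Gam L g g x"
    and b: "0 \<le> Gam L f f x - 2 * Gam L f g x + Gam L g g x" using 1 2 by (simp_all only:)
  from a b show ?thesis unfolding abs_le_iff by argo
qed

lemma Gam_meas:
  assumes "f \<in> D" "g \<in> D"
  shows "Gam L f g \<in> borel_measurable \<nu>"
proof -
  have "L (\<lambda>y. f y * g y) \<in> borel_measurable \<nu>" "L f \<in> borel_measurable \<nu>" "L g \<in> borel_measurable \<nu>"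
    using assms D_meas L_D D_mult by auto
  moreover have "f \<in> borel_measurable \<nu>" "g \<in> borel_measurable \<nu>" using assms D_meas by auto
  ultimately show ?thesis unfolding Gam_def by measurable
qed

abbreviation "H \<equiv> H1 D L \<nu>"
abbreviation ip :: "('a \<Rightarrow> real) \<Rightarrow> ('a \<Rightarrow> real) \<Rightarrow> real" where "ip f g \<equiv> (\<integral>x. f x * g x \<partial>\<nu>)"
abbreviation En where "En f g \<equiv> (\<integral>x. Gam L f g x \<partial>\<nu>)"

lemma sq_prod:
  fixes f g :: "'a \<Rightarrow> real"
  assumes "f \<in> borel_measurable \<nu>" "g \<in> borel_measurable \<nu>"
    "integrable \<nu> (\<lambda>x. (f x)\<^sup>2)" "integrable \<nu> (\<lambda>x. (g x)\<^sup>2)"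
  shows "integrable \<nu> (\<lambda>x. f x * g x)"
proof (rule Bochner_Integration.integrable_bound[where f="\<lambda>x. (f x)\<^sup>2 + (g x)\<^sup>2"])
  show "integrable \<nu> (\<lambda>x. (f x)\<^sup>2 + (g x)\<^sup>2)" using assms by auto
  show "(\<lambda>x. f x * g x) \<in> borel_measurable \<nu>" using assms by measurable
  have "\<bar>a * b\<bar> \<le> a\<^sup>2 + b\<^sup>2" for a b :: real
  proof -
    have "0 \<le> (\<bar>a\<bar> - \<bar>b\<bar>)\<^sup>2" by simp
    moreover have "(\<bar>a\<bar> - \<bar>b\<bar>)\<^sup>2 = a\<^sup>2 + b\<^sup>2 - 2 * (\<bar>a\<bar> * \<bar>b\<bar>)"
      by (simp add: power2_diff)
    moreover have "\<bar>a * b\<bar> = \<bar>a\<bar> * \<bar>b\<bar>" by (rule abs_mult)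
    moreover have "0 \<le> \<bar>a\<bar> * \<bar>b\<bar>" by simp
    ultimately show ?thesis by linarith
  qed
  then show "AE x in \<nu>. norm (f x * g x) \<le> norm ((f x)\<^sup>2 + (g x)\<^sup>2)" by (intro AE_I2) simp
qed

lemma icong: "integrable \<nu> g \<Longrightarrow> (\<And>x. x \<in> space \<nu> \<Longrightarrow> f x = g x) \<Longrightarrow> integrable \<nu> f"
  using Bochner_Integration.integrable_cong[where M=\<nu> and N=\<nu> and f=f and g=g] by simp

lemma one_sq: "integrable \<nu> (\<lambda>x. ((\<lambda>x. 1::real) x)\<^sup>2)"
  using prob_space.finite_measure[OF prob] by (simp add: finite_measure.integrable_const)

lemma H_D: "f \<in> H \<Longrightarrow> f \<in> D" and H_meas: "f \<in> H \<Longrightarrow> f \<in> borel_measurable \<nu>"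
  and H_sq: "f \<in> H \<Longrightarrow> integrable \<nu> (\<lambda>x. (f x)\<^sup>2)" and H_mean: "f \<in> H \<Longrightarrow> (\<integral>x. f x \<partial>\<nu>) = 0"
  and H_G: "f \<in> H \<Longrightarrow> integrable \<nu> (Gam L f f)"
  unfolding H1_def by auto

lemma H_int: "f \<in> H \<Longrightarrow> integrable \<nu> f"
  using sq_prod[of f "\<lambda>x. 1"] H_meas H_sq one_sq by simp

lemma H_prod: "f \<in> H \<Longrightarrow> g \<in> H \<Longrightarrow> integrable \<nu> (\<lambda>x. f x * g x)"
  using sq_prod H_meas H_sq by blast

lemma H_Gam: assumes "f \<in> H" "g \<in> H" shows "integrable \<nu> (Gam L f g)"
proof (rule Bochner_Integration.integrable_bound[where f="\<lambda>x. (Gam L f f x + Gam L g g x) / 2"])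
  show "integrable \<nu> (\<lambda>x. (Gam L f f x + Gam L g g x) / 2)" using assms H_G by auto
  show "Gam L f g \<in> borel_measurable \<nu>" using Gam_meas H_D assms by auto
  show "AE x in \<nu>. norm (Gam L f g x) \<le> norm ((Gam L f f x + Gam L g g x) / 2)"
  proof (intro AE_I2)
    fix x assume x: "x \<in> space \<nu>"
    have "\<bar>Gam L f g x\<bar> \<le> (Gam L f f x + Gam L g g x) / 2" using Gam_bound H_D assms x by auto
    then show "norm (Gam L f g x) \<le> norm ((Gam L f f x + Gam L g g x) / 2)" by simp
  qed
qed

lemma H_add: assumes "f \<in> H" "g \<in> H" shows "(\<lambda>x. f x + g x) \<in> H"
proof -
  have D: "(\<lambda>x. f x + g x) \<in> D" using D_add H_D assms by auto
  have sq: "integrable \<nu> (\<lambda>x. (f x + g x)\<^sup>2)"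
  proof (rule Bochner_Integration.integrable_bound[where f="\<lambda>x. 2 * (f x)\<^sup>2 + 2 * (g x)\<^sup>2"])
    show "integrable \<nu> (\<lambda>x. 2 * (f x)\<^sup>2 + 2 * (g x)\<^sup>2)" using assms H_sq by auto
    show "(\<lambda>x. (f x + g x)\<^sup>2) \<in> borel_measurable \<nu>" using assms H_meas by measurable
    have "(a + b)\<^sup>2 \<le> 2 * a\<^sup>2 + 2 * b\<^sup>2" for a b :: real
    proof -
      have "0 \<le> (a - b)\<^sup>2" by simp
      then show ?thesis by (simp add: power2_eq_square algebra_simps)
    qed
    then show "AE x in \<nu>. norm ((f x + g x)\<^sup>2) \<le> norm (2 * (f x)\<^sup>2 + 2 * (g x)\<^sup>2)"
      by (intro AE_I2) simp
  qed
  have mean: "(\<integral>x. f x + g x \<partial>\<nu>) = 0" using assms H_int H_mean by simp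
  have "integrable \<nu> (\<lambda>x. Gam L f f x + 2 * Gam L f g x + Gam L g g x)"
    using assms H_G H_Gam by auto
  moreover have "x \<in> space \<nu> \<Longrightarrow> Gam L (\<lambda>x. f x + g x) (\<lambda>x. f x + g x) x = Gam L f f x + 2 * Gam L f g x + Gam L g g x" for x
  proof -
    assume x: "x \<in> space \<nu>"
    have "Gam L (\<lambda>x. f x + g x) (\<lambda>x. f x + g x) x = Gam L f (\<lambda>x. f x + g x) x + Gam L g (\<lambda>x. f x + g x) x"
      using Gam_add_left[OF _ _ D x] H_D assms by blast
    also have "\<dots> = Gam L f f x + Gam L f g x + (Gam L g f x + Gam L g g x)"
      using Gam_add_right H_D assms x by simp
    finally show ?thesis using Gam_sym[of g f] by simp
  qed
  ultimately have "integrable \<nu> (Gam L (\<lambda>x. f x + g x) (\<lambda>x. f x + g x))"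
    by (rule icong)
  then show ?thesis unfolding H1_def using D sq mean D_meas by auto
qed

lemma H_smult: assumes "f \<in> H" shows "(\<lambda>x. c * f x) \<in> H"
proof -
  have D: "(\<lambda>x. c * f x) \<in> D" using D_smult H_D assms by auto
  have sq: "integrable \<nu> (\<lambda>x. (c * f x)\<^sup>2)" using H_sq[OF assms] by (simp add: power_mult_distrib)
  have mean: "(\<integral>x. c * f x \<partial>\<nu>) = 0" using assms H_mean by simp
  have "integrable \<nu> (\<lambda>x. c * (c * Gam L f f x))" using assms H_G by auto
  moreover have "x \<in> space \<nu> \<Longrightarrow> Gam L (\<lambda>x. c * f x) (\<lambda>x. c * f x) x = c * (c * Gam L f f x)" for x
    using Gam_smult_left[OF H_D[OF assms] D] Gam_smult_right[OF H_D[OF assms] H_D[OF assms]] by simp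
  ultimately have "integrable \<nu> (Gam L (\<lambda>x. c * f x) (\<lambda>x. c * f x))"
    by (rule icong)
  then show ?thesis unfolding H1_def using D sq mean D_meas by auto
qed

lemma H_zero: "(\<lambda>x. 0) \<in> H"
proof -
  have "integrable \<nu> (\<lambda>x. 0::real)" by simp
  moreover have "x \<in> space \<nu> \<Longrightarrow> Gam L (\<lambda>x. 0) (\<lambda>x. 0) x = 0" for x using Gam_zero_left by simp
  ultimately have "integrable \<nu> (Gam L (\<lambda>x. 0) (\<lambda>x. 0))"
    by (rule icong)
  then show ?thesis unfolding H1_def using D_const D_meas by auto
qed

lemma En_zero: "En (\<lambda>x. 0) g = 0"
  by (subst Bochner_Integration.integral_cong[where M=\<nu> and N=\<nu> and g="\<lambda>x. 0"]) (auto simp: Gam_zero_left)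

definition bil :: "(('a \<Rightarrow> real) \<Rightarrow> ('a \<Rightarrow> real) \<Rightarrow> real) \<Rightarrow> bool" where
  "bil B \<longleftrightarrow> (\<forall>u\<in>H. \<forall>v\<in>H. \<forall>w\<in>H. B (\<lambda>x. u x + v x) w = B u w + B v w)
     \<and> (\<forall>u\<in>H. \<forall>w\<in>H. \<forall>c. B (\<lambda>x. c * u x) w = c * B u w) \<and> (\<forall>u v. B u v = B v u)"

lemma bil_ip: "bil ip"
  unfolding bil_def
proof (intro conjI ballI allI)
  fix u v w assume "u \<in> H" "v \<in> H" "w \<in> H"
  then show "ip (\<lambda>x. u x + v x) w = ip u w + ip v w"
    using H_prod by (simp add: distrib_right)
next
  fix u w c show "ip (\<lambda>x. c * u x) w = c * ip u w" by (simp add: mult.assoc integral_mult_right_zero)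
next
  fix u v :: "'a \<Rightarrow> real" show "ip u v = ip v u" by (simp add: mult.commute)
qed

lemma bil_En: "bil En"
  unfolding bil_def
proof (intro conjI ballI allI)
  fix u v w assume a: "u \<in> H" "v \<in> H" "w \<in> H"
  have "En (\<lambda>x. u x + v x) w = (\<integral>x. Gam L u w x + Gam L v w x \<partial>\<nu>)"
    by (intro Bochner_Integration.integral_cong refl) (simp add: Gam_add_left H_D a)
  also have "\<dots> = En u w + En v w" using H_Gam a by simp
  finally show "En (\<lambda>x. u x + v x) w = En u w + En v w" .
next
  fix u w c assume a: "u \<in> H" "w \<in> H"
  have "En (\<lambda>x. c * u x) w = (\<integral>x. c * Gam L u w x \<partial>\<nu>)"
    by (intro Bochner_Integration.integral_cong refl) (simp add: Gam_smult_left H_D a)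
  then show "En (\<lambda>x. c * u x) w = c * En u w" by simp
next
  fix u v :: "'a \<Rightarrow> real" show "En u v = En v u" by (simp add: Gam_sym)
qed

lemma bil_add_left: "bil B \<Longrightarrow> u \<in> H \<Longrightarrow> v \<in> H \<Longrightarrow> w \<in> H \<Longrightarrow> B (\<lambda>x. u x + v x) w = B u w + B v w"
  unfolding bil_def by blast
lemma bil_smult_left: "bil B \<Longrightarrow> u \<in> H \<Longrightarrow> w \<in> H \<Longrightarrow> B (\<lambda>x. c * u x) w = c * B u w"
  unfolding bil_def by blast
lemma bil_sym: "bil B \<Longrightarrow> B u v = B v u"
  unfolding bil_def by blast
lemma bil_add_right: "bil B \<Longrightarrow> u \<in> H \<Longrightarrow> v \<in> H \<Longrightarrow> w \<in> H \<Longrightarrow> B w (\<lambda>x. u x + v x) = B w u + B w v"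
proof -
  assume b: "bil B" and h: "u \<in> H" "v \<in> H" "w \<in> H"
  have "B w (\<lambda>x. u x + v x) = B (\<lambda>x. u x + v x) w" by (rule bil_sym[OF b])
  also have "\<dots> = B u w + B v w" by (rule bil_add_left[OF b h])
  also have "\<dots> = B w u + B w v" by (simp only: bil_sym[OF b, of u w] bil_sym[OF b, of v w])
  finally show ?thesis .
qed
lemma bil_smult_right: "bil B \<Longrightarrow> u \<in> H \<Longrightarrow> w \<in> H \<Longrightarrow> B w (\<lambda>x. c * u x) = c * B w u"
proof -
  assume b: "bil B" and h: "u \<in> H" "w \<in> H"
  have "B w (\<lambda>x. c * u x) = B (\<lambda>x. c * u x) w" by (rule bil_sym[OF b])
  also have "\<dots> = c * B u w" by (rule bil_smult_left[OF b h])
  also have "\<dots> = c * B w u" by (simp only: bil_sym[OF b, of u w])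
  finally show ?thesis .
qed

lemma bil_sq_add:
  assumes "bil B" "u \<in> H" "v \<in> H"
  shows "B (\<lambda>x. u x + v x) (\<lambda>x. u x + v x) = B u u + 2 * B u v + B v v"
proof -
  have uv: "(\<lambda>x. u x + v x) \<in> H" using H_add assms by auto
  have "B (\<lambda>x. u x + v x) (\<lambda>x. u x + v x) = B u (\<lambda>x. u x + v x) + B v (\<lambda>x. u x + v x)"
    using bil_add_left[OF assms(1,2,3) uv] .
  also have "\<dots> = B u u + B u v + (B v u + B v v)"
    by (simp only: bil_add_right[OF assms(1,2,3) assms(2)] bil_add_right[OF assms(1,2,3) assms(3)])
  finally show ?thesis using bil_sym[OF assms(1), of v u] by simp
qed

lemma bil_quad:
  assumes "bil B" "u \<in> H" "v \<in> H"
  shows "B (\<lambda>x. u x + t * v x) (\<lambda>x. u x + t * v x) = B u u + 2 * t * B u v + t\<^sup>2 * B v v"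
proof -
  have tv: "(\<lambda>x. t * v x) \<in> H" using H_smult assms by auto
  have "B (\<lambda>x. u x + t * v x) (\<lambda>x. u x + t * v x) = B u u + 2 * B u (\<lambda>x. t * v x) + B (\<lambda>x. t * v x) (\<lambda>x. t * v x)"
    using bil_sq_add[OF assms(1,2) tv] .
  also have "B u (\<lambda>x. t * v x) = t * B u v" using bil_smult_right[OF assms(1,3,2)] .
  also have "B (\<lambda>x. t * v x) (\<lambda>x. t * v x) = t * (t * B v v)"
    using bil_smult_left[OF assms(1,3) tv] bil_smult_right[OF assms(1,3,3)] by simp
  finally show ?thesis by (simp add: power2_eq_square algebra_simps)
qed

lemma bil_zero: "bil B \<Longrightarrow> w \<in> H \<Longrightarrow> B (\<lambda>x. 0) w = 0"
  using bil_smult_left[OF _ H_zero, of B w 0] by simp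

lemma sum_H: "finite I \<Longrightarrow> (\<And>i. i \<in> I \<Longrightarrow> p i \<in> H) \<Longrightarrow> (\<lambda>x. \<Sum>i\<in>I. p i x) \<in> H"
proof (induction I rule: finite_induct)
  case empty then show ?case using H_zero by simp
next
  case (insert a F) then show ?case using H_add[of "p a" "\<lambda>x. \<Sum>i\<in>F. p i x"] by simp
qed

lemma bil_sum_left:
  assumes b: "bil B" and fin: "finite I" and pI: "\<And>i. i \<in> I \<Longrightarrow> p i \<in> H" and w: "w \<in> H"
  shows "B (\<lambda>x. \<Sum>i\<in>I. p i x) w = (\<Sum>i\<in>I. B (p i) w)"
  using fin pI
proof (induction I rule: finite_induct)
  case empty then show ?case using bil_zero[OF b w] by simp
next
  case (insert a F)
  have "B (\<lambda>x. \<Sum>i\<in>insert a F. p i x) w = B (\<lambda>x. p a x + (\<Sum>i\<in>F. p i x)) w"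
    using insert.hyps by simp
  also have "\<dots> = B (p a) w + B (\<lambda>x. \<Sum>i\<in>F. p i x) w"
    using bil_add_left[OF b, of "p a" "\<lambda>x. \<Sum>i\<in>F. p i x" w] insert sum_H w by auto
  finally show ?case using insert by simp
qed

lemma cs_real:
  fixes a b c :: real
  assumes "\<And>t. 0 \<le> a + 2 * t * b + t\<^sup>2 * c" "0 \<le> c"
  shows "b\<^sup>2 \<le> a * c"
proof (cases "c = 0")
  case True
  show ?thesis
  proof (rule ccontr)
    assume "\<not> ?thesis"
    then have "b \<noteq> 0" using True by simp
    have "0 \<le> a + 2 * (- (a + 1) / (2 * b)) * b + (- (a + 1) / (2 * b))\<^sup>2 * c" by (rule assms(1))
    also have "\<dots> = -1" using True \<open>b \<noteq> 0\<close> by (simp add: field_simps)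
    finally show False by simp
  qed
next
  case False
  then have c: "c > 0" using assms(2) by simp
  have "0 \<le> a + 2 * (- b / c) * b + (- b / c)\<^sup>2 * c" by (rule assms(1))
  also have "\<dots> = a - b\<^sup>2 / c" using c by (simp add: field_simps power2_eq_square)
  finally show ?thesis using c by (simp add: field_simps)
qed

lemma zero_Sp: "E \<subseteq> H \<Longrightarrow> (\<lambda>x. 0) \<in> Sp_next D L \<nu> E"
  unfolding Sp_next_def orth_def using H_zero En_zero by auto

lemma Esp_H: "Espace D L \<nu> m \<subseteq> H"
proof (induction m)
  case 0 then show ?case using H_zero by simp
next
  case (Suc m)
  show ?case
  proof
    fix f assume "f \<in> Espace D L \<nu> (Suc m)"
    then obtain e s where f: "f = (\<lambda>x. e x + s x)" and e: "e \<in> Espace D L \<nu> m"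
      and s: "s \<in> Sp_next D L \<nu> (Espace D L \<nu> m)" by auto
    have "s \<in> H" using s unfolding Sp_next_def by auto
    then show "f \<in> H" using f e Suc H_add[of e s] by auto
  qed
qed

lemma Esp_SucI: "e \<in> Espace D L \<nu> m \<Longrightarrow> s \<in> Sp_next D L \<nu> (Espace D L \<nu> m) \<Longrightarrow> (\<lambda>x. e x + s x) \<in> Espace D L \<nu> (Suc m)"
  by auto

lemma Esp_zero: "(\<lambda>x. 0) \<in> Espace D L \<nu> m"
proof (induction m)
  case 0 then show ?case by simp
next
  case (Suc m)
  show ?case using Esp_SucI[OF Suc zero_Sp[OF Esp_H]] by simp
qed

lemma Esp_mono1: "Espace D L \<nu> m \<subseteq> Espace D L \<nu> (Suc m)"
proof
  fix e assume "e \<in> Espace D L \<nu> m"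
  then show "e \<in> Espace D L \<nu> (Suc m)" using Esp_SucI[OF _ zero_Sp[OF Esp_H]] by simp
qed

lemma Esp_mono: assumes "m \<le> n" shows "Espace D L \<nu> m \<subseteq> Espace D L \<nu> n"
  using assms
proof (induction n rule: dec_induct)
  case base then show ?case by simp
next
  case (step n) then show ?case using Esp_mono1[of n] by blast
qed

lemma Sp_in_Esp: "s \<in> Sp_next D L \<nu> (Espace D L \<nu> m) \<Longrightarrow> s \<in> Espace D L \<nu> (Suc m)"
proof -
  assume "s \<in> Sp_next D L \<nu> (Espace D L \<nu> m)"
  then show ?thesis using Esp_SucI[OF Esp_zero[of m]] by simp
qed

lemma V_closed:
  assumes "E \<subseteq> H" "u \<in> H \<inter> orth \<nu> E" "v \<in> H \<inter> orth \<nu> E"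
  shows "(\<lambda>x. u x + t * v x) \<in> H \<inter> orth \<nu> E"
proof -
  have 1: "(\<lambda>x. u x + t * v x) \<in> H" using H_add H_smult assms by auto
  have "(\<lambda>x. u x + t * v x) \<in> orth \<nu> E"
    unfolding orth_def
  proof (intro CollectI ballI)
    fix e assume e: "e \<in> E"
    then have eH: "e \<in> H" using assms by auto
    have "(\<integral>x. (u x + t * v x) * e x \<partial>\<nu>) = (\<integral>x. u x * e x + t * (v x * e x) \<partial>\<nu>)"
      by (simp add: algebra_simps)
    also have "\<dots> = ip u e + t * ip v e" using H_prod eH assms by simp
    also have "\<dots> = 0" using assms e unfolding orth_def by auto
    finally show "(\<integral>x. (u x + t * v x) * e x \<partial>\<nu>) = 0" .
  qed
  with 1 show ?thesis by blast
qed

end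


context setting begin

lemma En_nonneg: "u \<in> D \<Longrightarrow> En u u \<ge> 0"
  by (intro integral_nonneg_AE AE_I2 Gam_nonneg)

lemma ip_nonneg: "ip u u \<ge> 0"
  by (intro integral_nonneg_AE AE_I2) simp

lemma ip_sq: "(\<integral>x. (u x)\<^sup>2 \<partial>\<nu>) = ip u u"
  by (simp add: power2_eq_square)

lemma lam_lower:
  assumes u: "u \<in> H \<inter> orth \<nu> E"
  shows "lam_next D L \<nu> E * ip u u \<le> En u u"
proof (cases "ip u u = 0")
  case True then show ?thesis using En_nonneg H_D u by simp
next
  case False
  have pos: "ip u u > 0" using ip_nonneg[of u] False by linarith
  let ?S = "{(\<integral>x. Gam L f f x \<partial>\<nu>) / (\<integral>x. (f x)\<^sup>2 \<partial>\<nu>) | f.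
        f \<in> H1 D L \<nu> \<inter> orth \<nu> E \<and> (\<integral>x. (f x)\<^sup>2 \<partial>\<nu>) \<noteq> 0}"
  have mem: "En u u / ip u u \<in> ?S" using u False unfolding ip_sq by blast
  have bdd: "bdd_below ?S"
  proof (rule bdd_belowI[where m=0])
    fix y assume "y \<in> ?S"
    then obtain f where y: "y = En f f / (\<integral>x. (f x)\<^sup>2 \<partial>\<nu>)" and f: "f \<in> H" by blast
    show "0 \<le> y" unfolding y ip_sq using En_nonneg[OF H_D[OF f]] ip_nonneg[of f] by simp
  qed
  have "lam_next D L \<nu> E \<le> En u u / ip u u"
    unfolding lam_next_def by (rule cInf_lower[OF mem bdd])
  then show ?thesis using pos by (simp add: pos_le_divide_eq)
qed

lemma lam_nonneg_case:
  assumes u: "u \<in> H \<inter> orth \<nu> E"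
  shows "lam_next D L \<nu> E * ip u u \<ge> 0"
proof (cases "ip u u = 0")
  case True then show ?thesis by simp
next
  case False
  let ?S = "{(\<integral>x. Gam L f f x \<partial>\<nu>) / (\<integral>x. (f x)\<^sup>2 \<partial>\<nu>) | f.
        f \<in> H1 D L \<nu> \<inter> orth \<nu> E \<and> (\<integral>x. (f x)\<^sup>2 \<partial>\<nu>) \<noteq> 0}"
  have mem: "En u u / ip u u \<in> ?S" using u False unfolding ip_sq by blast
  have "0 \<le> Inf ?S"
  proof (rule cInf_greatest)
    show "?S \<noteq> {}" using mem by blast
    fix y assume "y \<in> ?S"
    then obtain f where y: "y = En f f / (\<integral>x. (f x)\<^sup>2 \<partial>\<nu>)" and f: "f \<in> H" by blast
    show "0 \<le> y" unfolding y ip_sq using En_nonneg[OF H_D[OF f]] ip_nonneg[of f] by simp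
  qed
  then show ?thesis using ip_nonneg[of u] unfolding lam_next_def by simp
qed

lemma orth_anti: "A \<subseteq> B \<Longrightarrow> orth \<nu> B \<subseteq> orth \<nu> A"
  unfolding orth_def by auto

end


theorem mainTheorem3:
  fixes D :: "('a \<Rightarrow> real) set"
    and L :: "('a \<Rightarrow> real) \<Rightarrow> ('a \<Rightarrow> real)"
    and \<mu> \<nu> :: "'a measure"
    and lam\<mu> :: "nat \<Rightarrow> real"
    and k :: nat
    and fk :: "'a \<Rightarrow> real"
    and p :: "nat \<Rightarrow> 'a \<Rightarrow> real"
  assumes gen: "markov_generator D L \<mu>"
    and spec_mono: "\<And>i j. 1 \<le> i \<Longrightarrow> i < j \<Longrightarrow> lam\<mu> i < lam\<mu> j"
    and spec_pos: "0 < lam\<mu> 1"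
    and spec: "{lam\<mu> i | i. 1 \<le> i} = {l. 0 < l \<and> is_eigenvalue D L \<mu> l}"
    and k: "1 \<le> k"
    and fk_D: "fk \<in> D"
    and fk_eig: "AE x in \<mu>. - L fk x = lam\<mu> k * fk x"
    and fk_sq_mu: "integrable \<mu> (\<lambda>x. (fk x)\<^sup>2)"
    and fk_mean_mu: "(\<integral>x. fk x \<partial>\<mu>) = 0"
    and fk_norm_mu: "(\<integral>x. (fk x)\<^sup>2 \<partial>\<mu>) = 1"
    and nu_prob: "prob_space \<nu>"
    and nu_sets: "sets \<nu> = sets \<mu>"
    and fk_sq_nu: "integrable \<nu> (\<lambda>x. (fk x)\<^sup>2)"
    and fk_mean_nu: "(\<integral>x. fk x \<partial>\<nu>) = 0"
    and fk_norm_nu: "(\<integral>x. (fk x)\<^sup>2 \<partial>\<nu>) = 1"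
    and fk_Gam_int: "integrable \<nu> (Gam L fk fk)"
    and fk_energy: "(\<integral>x. Gam L fk fk x \<partial>\<nu>) \<le> lam\<mu> k"
    and p_Sp: "\<And>i. 1 \<le> i \<Longrightarrow> i < k \<Longrightarrow> p i \<in> Sp D L \<nu> i"
    and p_proj: "(\<lambda>x. fk x - (\<Sum>i\<in>{1..<k}. p i x)) \<in> orth \<nu> (Espace D L \<nu> (k - 1))"
  shows "\<forall>g \<in> H1 D L \<nu> \<inter> orth \<nu> (Espace D L \<nu> (k - 1)).
           \<bar>\<integral>x. lam_nu D L \<nu> k * fk x * g x - Gam L fk g x \<partial>\<nu>\<bar>
             \<le> sqrt (lam\<mu> k - lam_nu D L \<nu> k
                      + (\<Sum>i\<in>{1..<k}. (lam_nu D L \<nu> k - lam_nu D L \<nu> i) * (\<integral>x. (p i x)\<^sup>2 \<partial>\<nu>)))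
               * sqrt (\<integral>x. Gam L g g x \<partial>\<nu>)"
proof -
  have sp: "space \<nu> = space \<mu>" by (rule sets_eq_imp_space_eq[OF nu_sets])
  have bm: "borel_measurable \<nu> = borel_measurable \<mu>" by (rule measurable_cong_sets[OF nu_sets refl])
  interpret setting D L \<nu>
    using gen nu_prob unfolding setting_def sp bm markov_generator_def by auto
  define lam where "lam = lam_nu D L \<nu> k"
  define E where "E = Espace D L \<nu> (k - 1)"
  define V where "V = H \<inter> orth \<nu> E"
  define I where "I = {i \<in> {1..<k}. lam_nu D L \<nu> i \<noteq> 0}"
  define P where "P = (\<lambda>x. \<Sum>i\<in>I. p i x)"
  define h where "h = (\<lambda>x. fk x + (-1) * P x)"
  have lam_eq: "lam = lam_next D L \<nu> E" by (simp add: lam_def E_def lam_nu_def)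
  have EH: "E \<subseteq> H" using Esp_H by (simp add: E_def)
  have finI: "finite I" by (simp add: I_def)
  have IK: "I \<subseteq> {1..<k}" by (auto simp: I_def)
  have pSp: "p i \<in> H \<and> p i \<in> orth \<nu> (Espace D L \<nu> (i-1)) \<and>
      (\<forall>g\<in>H \<inter> orth \<nu> (Espace D L \<nu> (i-1)). ip (p i) g = 1 / lam_nu D L \<nu> i * En (p i) g)"
    if "i \<in> {1..<k}" for i
    using p_Sp[of i] that unfolding Sp_def Sp_next_def lam_nu_def by auto
  have pH: "p i \<in> H" if "i \<in> {1..<k}" for i using pSp that by blast
  have pE_gen: "p i \<in> Espace D L \<nu> m" if "i \<in> {1..<k}" "i \<le> m" for i m
  proof -
    have s: "p i \<in> Sp_next D L \<nu> (Espace D L \<nu> (i-1))" using p_Sp[of i] that unfolding Sp_def by auto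
    have "p i \<in> Espace D L \<nu> (Suc (i-1))" by (rule Sp_in_Esp[OF s])
    moreover have "Suc (i-1) \<le> m" using that by auto
    ultimately show ?thesis using Esp_mono by blast
  qed
  have pE: "p i \<in> E" if "i \<in> {1..<k}" for i
    using pE_gen[of i "k-1"] that unfolding E_def by auto
  have orthE: "orth \<nu> E \<subseteq> orth \<nu> (Espace D L \<nu> (i-1))" if "i \<in> {1..<k}" for i
  proof -
    have "i - 1 \<le> k - 1" using that by auto
    then show ?thesis using orth_anti[OF Esp_mono] unfolding E_def by blast
  qed
  have porth: "p j \<in> orth \<nu> (Espace D L \<nu> (i-1))" if "i \<in> {1..<k}" "j \<in> {1..<k}" "i \<le> j" for i j
  proof -
    have "i - 1 \<le> j - 1" using that by auto
    then show ?thesis using orth_anti[OF Esp_mono] pSp[of j] that by blast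
  qed
  have orth_ij: "ip (p j) (p i) = 0" if "i \<in> {1..<k}" "j \<in> {1..<k}" "i < j" for i j
  proof -
    have "p i \<in> Espace D L \<nu> (j-1)" using pE_gen[of i "j-1"] that by auto
    then show ?thesis using pSp[of j] that unfolding orth_def by auto
  qed
  have ip_ne: "ip (p i) (p j) = 0" if "i \<in> {1..<k}" "j \<in> {1..<k}" "i \<noteq> j" for i j
  proof (cases "i < j")
    case True then show ?thesis using orth_ij[of i j] that bil_sym[OF bil_ip] by metis
  next
    case False then show ?thesis using orth_ij[of j i] that by simp
  qed
  have spec_rel: "En (p i) g = lam_nu D L \<nu> i * ip (p i) g"
    if "i \<in> I" "g \<in> H" "g \<in> orth \<nu> (Espace D L \<nu> (i-1))" for i g
  proof -
    have "ip (p i) g = 1 / lam_nu D L \<nu> i * En (p i) g" using pSp[of i] that IK by auto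
    then show ?thesis using that unfolding I_def by (simp add: field_simps)
  qed
  have a_zero: "ip (p i) (p i) = 0" if "i \<in> {1..<k}" "i \<notin> I" for i
  proof -
    have "ip (p i) (p i) = 1 / lam_nu D L \<nu> i * En (p i) (p i)" using pSp[of i] that by auto
    then show ?thesis using that unfolding I_def by simp
  qed
  have AE_zero: "AE x in \<nu>. p i x = 0" if "i \<in> {1..<k}" "i \<notin> I" for i
  proof -
    have "AE x in \<nu>. p i x * p i x = 0"
      using integral_nonneg_eq_0_iff_AE[of \<nu> "\<lambda>x. p i x * p i x"] H_prod[OF pH pH] a_zero[OF that] that
      by simp
    then show ?thesis by simp
  qed
  have fkH: "fk \<in> H" unfolding H1_def using fk_D D_meas fk_sq_nu fk_mean_nu fk_Gam_int by auto
  have pIH: "\<And>i. i \<in> I \<Longrightarrow> p i \<in> H" using pH IK by auto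
  have PH: "P \<in> H" unfolding P_def using sum_H[OF finI pIH] .
  have hH: "h \<in> H" unfolding h_def using H_add[OF fkH H_smult[OF PH]] .
  have fk_eq: "(\<lambda>x. h x + P x) = fk" by (simp add: h_def)
  have ipPg: "ip P g = 0" if "g \<in> V" for g
  proof -
    have gH: "g \<in> H" using that V_def by auto
    have "ip P g = (\<Sum>i\<in>I. ip (p i) g)" unfolding P_def by (rule bil_sum_left[OF bil_ip finI pIH gH])
    also have "\<dots> = 0"
    proof (rule sum.neutral, rule ballI)
      fix i assume i: "i \<in> I"
      have "ip g (p i) = 0" using that pE[of i] i IK unfolding V_def orth_def by auto
      then show "ip (p i) g = 0" using bil_sym[OF bil_ip] by metis
    qed
    finally show ?thesis .
  qed
  have EnPg: "En P g = 0" if "g \<in> V" for g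
  proof -
    have gH: "g \<in> H" using that V_def by auto
    have "En P g = (\<Sum>i\<in>I. En (p i) g)" unfolding P_def by (rule bil_sum_left[OF bil_En finI pIH gH])
    also have "\<dots> = 0"
    proof (rule sum.neutral, rule ballI)
      fix i assume i: "i \<in> I"
      have iK: "i \<in> {1..<k}" using i IK by auto
      have g_o: "g \<in> orth \<nu> (Espace D L \<nu> (i-1))" using orthE[OF iK] that V_def by auto
      have "ip g (p i) = 0" using that pE[of i] i IK unfolding V_def orth_def by auto
      then have "ip (p i) g = 0" using bil_sym[OF bil_ip] by metis
      then show "En (p i) g = 0" using spec_rel[OF i gH g_o] by simp
    qed
    finally show ?thesis .
  qed
  define R where "R = (\<lambda>x. fk x - (\<Sum>i\<in>{1..<k}. p i x))"
  have RH: "R \<in> H"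
  proof -
    have "(\<lambda>x. fk x + (-1) * (\<Sum>i\<in>{1..<k}. p i x)) \<in> H"
      using H_add[OF fkH H_smult[OF sum_H[of "{1..<k}" p], where c="-1"]] pH by auto
    then show ?thesis unfolding R_def by simp
  qed
  have hV: "h \<in> V"
  proof -
    have "h \<in> orth \<nu> E"
      unfolding orth_def
    proof (intro CollectI ballI)
      fix e assume e: "e \<in> E"
      then have eH: "e \<in> H" using EH by auto
      have AEall: "AE x in \<nu>. \<forall>i\<in>{1..<k} - I. p i x = 0"
        using AE_zero by (intro eventually_ball_finite) auto
      have "AE x in \<nu>. h x * e x = R x * e x"
      proof (rule AE_mp[OF AEall], rule AE_I2, rule impI)
        fix x assume z: "\<forall>i\<in>{1..<k} - I. p i x = 0"
        have "(\<Sum>i\<in>{1..<k}. p i x) = (\<Sum>i\<in>{1..<k} - I. p i x) + (\<Sum>i\<in>I. p i x)"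
          using sum.subset_diff[OF IK, of "\<lambda>i. p i x"] by simp
        also have "\<dots> = P x" using z unfolding P_def by simp
        finally show "h x * e x = R x * e x" unfolding h_def R_def by simp
      qed
      then have "ip h e = ip R e"
        using H_prod[OF hH eH] H_prod[OF RH eH] by (intro integral_cong_AE) auto
      also have "\<dots> = 0" using p_proj e unfolding R_def E_def orth_def by auto
      finally show "ip h e = 0" .
    qed
    then show ?thesis using hH V_def by auto
  qed
  have ipPh: "ip P h = 0" using ipPg[OF hV] .
  have EnPh: "En P h = 0" using EnPg[OF hV] .
  define a where "a = (\<lambda>i. ip (p i) (p i))"
  have ipPP: "ip P P = (\<Sum>i\<in>I. a i)"
  proof -
    have "ip P P = (\<Sum>i\<in>I. ip (p i) P)" unfolding P_def by (rule bil_sum_left[OF bil_ip finI pIH PH[unfolded P_def]])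
    also have "\<dots> = (\<Sum>i\<in>I. a i)"
    proof (rule sum.cong[OF refl])
      fix i assume i: "i \<in> I"
      have "ip (p i) P = ip P (p i)" by (rule bil_sym[OF bil_ip])
      also have "\<dots> = (\<Sum>j\<in>I. ip (p j) (p i))" unfolding P_def by (rule bil_sum_left[OF bil_ip finI pIH pIH[OF i]])
      also have "\<dots> = (\<Sum>j\<in>I. if j = i then a i else 0)"
      proof (rule sum.cong[OF refl])
        fix j assume j: "j \<in> I"
        show "ip (p j) (p i) = (if j = i then a i else 0)"
        proof -
          have "j \<in> {1..<k}" "i \<in> {1..<k}" using j i IK by blast+
          then show ?thesis using ip_ne[of j i] unfolding a_def by (cases "j = i") auto
        qed
      qed
      also have "\<dots> = a i" using finI i by simp
      finally show "ip (p i) P = a i" .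
    qed
    finally show ?thesis .
  qed
  have Enpp: "En (p j) (p i) = (if j = i then lam_nu D L \<nu> i * a i else 0)" if i: "i \<in> I" and j: "j \<in> I" for i j
  proof -
    have iK: "i \<in> {1..<k}" and jK: "j \<in> {1..<k}" using i j IK by auto
    consider "j = i" | "j < i" | "i < j" by linarith
    then show ?thesis
    proof cases
      case 1 then show ?thesis using spec_rel[OF i pH[OF iK]] pSp[OF iK] by (simp add: a_def)
    next
      case 2
      have "En (p j) (p i) = lam_nu D L \<nu> j * ip (p j) (p i)"
        using spec_rel[OF j pH[OF iK] porth[OF jK iK]] 2 by simp
      then show ?thesis using ip_ne[OF jK iK] 2 by simp
    next
      case 3
      have "En (p j) (p i) = En (p i) (p j)" by (rule bil_sym[OF bil_En])
      also have "\<dots> = lam_nu D L \<nu> i * ip (p i) (p j)"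
        using spec_rel[OF i pH[OF jK] porth[OF iK jK]] 3 by simp
      finally show ?thesis using ip_ne[OF iK jK] 3 by simp
    qed
  qed
  have EnPP: "En P P = (\<Sum>i\<in>I. lam_nu D L \<nu> i * a i)"
  proof -
    have "En P P = (\<Sum>i\<in>I. En (p i) P)" unfolding P_def by (rule bil_sum_left[OF bil_En finI pIH PH[unfolded P_def]])
    also have "\<dots> = (\<Sum>i\<in>I. lam_nu D L \<nu> i * a i)"
    proof (rule sum.cong[OF refl])
      fix i assume i: "i \<in> I"
      have "En (p i) P = En P (p i)" by (rule bil_sym[OF bil_En])
      also have "\<dots> = (\<Sum>j\<in>I. En (p j) (p i))" unfolding P_def by (rule bil_sum_left[OF bil_En finI pIH pIH[OF i]])
      also have "\<dots> = (\<Sum>j\<in>I. if j = i then lam_nu D L \<nu> i * a i else 0)"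
        by (rule sum.cong[OF refl]) (use Enpp i in auto)
      also have "\<dots> = lam_nu D L \<nu> i * a i" using finI i by simp
      finally show "En (p i) P = lam_nu D L \<nu> i * a i" .
    qed
    finally show ?thesis .
  qed
  have ipfk: "ip fk fk = ip h h + (\<Sum>i\<in>I. a i)"
  proof -
    have "ip fk fk = ip (\<lambda>x. h x + P x) (\<lambda>x. h x + P x)" by (simp only: fk_eq[symmetric])
    also have "\<dots> = ip h h + 2 * ip h P + ip P P" by (rule bil_sq_add[OF bil_ip hH PH])
    also have "ip h P = 0" using ipPh bil_sym[OF bil_ip] by metis
    finally show ?thesis using ipPP by simp
  qed
  have Enfk: "En fk fk = En h h + (\<Sum>i\<in>I. lam_nu D L \<nu> i * a i)"
  proof -
    have "En fk fk = En (\<lambda>x. h x + P x) (\<lambda>x. h x + P x)" by (simp only: fk_eq[symmetric])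
    also have "\<dots> = En h h + 2 * En h P + En P P" by (rule bil_sq_add[OF bil_En hH PH])
    also have "En h P = 0" using EnPh bil_sym[OF bil_En] by metis
    finally show ?thesis using EnPP by simp
  qed
  have one: "ip fk fk = 1" using fk_norm_nu by (simp add: power2_eq_square)
  have sumK: "(\<Sum>i\<in>{1..<k}. (lam - lam_nu D L \<nu> i) * (\<integral>x. (p i x)\<^sup>2 \<partial>\<nu>)) = (\<Sum>i\<in>I. (lam - lam_nu D L \<nu> i) * a i)"
  proof -
    have "(\<Sum>i\<in>{1..<k}. (lam - lam_nu D L \<nu> i) * (\<integral>x. (p i x)\<^sup>2 \<partial>\<nu>)) = (\<Sum>i\<in>{1..<k}. (lam - lam_nu D L \<nu> i) * a i)"
      by (simp add: a_def power2_eq_square)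
    also have "\<dots> = (\<Sum>i\<in>I. (lam - lam_nu D L \<nu> i) * a i)"
      by (rule sum.mono_neutral_right) (use IK a_zero in \<open>auto simp: a_def\<close>)
    finally show ?thesis .
  qed
  have Qhh: "En h h - lam * ip h h \<le> lam\<mu> k - lam + (\<Sum>i\<in>{1..<k}. (lam - lam_nu D L \<nu> i) * (\<integral>x. (p i x)\<^sup>2 \<partial>\<nu>))"
  proof -
    have "(\<Sum>i\<in>I. (lam - lam_nu D L \<nu> i) * a i) = lam * (\<Sum>i\<in>I. a i) - (\<Sum>i\<in>I. lam_nu D L \<nu> i * a i)"
      by (simp add: sum_distrib_left sum_subtractf left_diff_distrib)
    moreover have "ip h h = 1 - (\<Sum>i\<in>I. a i)" using ipfk one by simp
    then have "lam * ip h h = lam - lam * (\<Sum>i\<in>I. a i)" by (simp add: right_diff_distrib)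
    ultimately show ?thesis using sumK Enfk fk_energy by linarith
  qed
  have Qhh0: "0 \<le> En h h - lam * ip h h" using lam_lower[of h E] hV V_def lam_eq by simp
  define Q where "Q = (\<lambda>u v. En u v - lam * ip u v)"
  have main: "\<bar>\<integral>x. lam * fk x * g x - Gam L fk g x \<partial>\<nu>\<bar>
     \<le> sqrt (lam\<mu> k - lam + (\<Sum>i\<in>{1..<k}. (lam - lam_nu D L \<nu> i) * (\<integral>x. (p i x)\<^sup>2 \<partial>\<nu>)))
        * sqrt (\<integral>x. Gam L g g x \<partial>\<nu>)" if gV: "g \<in> V" for g
  proof -
    have gH: "g \<in> H" using gV V_def by auto
    have hV': "h \<in> H \<inter> orth \<nu> E" using hV V_def by simp
    have gV': "g \<in> H \<inter> orth \<nu> E" using gV V_def by simp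
    have quad: "0 \<le> Q h h + 2 * t * Q h g + t\<^sup>2 * Q g g" for t
    proof -
      have w: "(\<lambda>x. h x + t * g x) \<in> H \<inter> orth \<nu> E" by (rule V_closed[OF EH hV' gV'])
      have "0 \<le> En (\<lambda>x. h x + t * g x) (\<lambda>x. h x + t * g x) - lam * ip (\<lambda>x. h x + t * g x) (\<lambda>x. h x + t * g x)"
        using lam_lower[OF w] lam_eq by simp
      also have "\<dots> = Q h h + 2 * t * Q h g + t\<^sup>2 * Q g g"
        unfolding Q_def bil_quad[OF bil_En hH gH] bil_quad[OF bil_ip hH gH] by (simp add: algebra_simps)
      finally show ?thesis .
    qed
    have Qgg0: "0 \<le> Q g g" using lam_lower[OF gV'] lam_eq unfolding Q_def by simp
    have cs: "(Q h g)\<^sup>2 \<le> Q h h * Q g g" by (rule cs_real[OF quad Qgg0])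
    have Qgg_le: "Q g g \<le> En g g" using lam_nonneg_case[OF gV'] lam_eq unfolding Q_def by simp
    have Qhh': "0 \<le> Q h h" "Q h h \<le> lam\<mu> k - lam + (\<Sum>i\<in>{1..<k}. (lam - lam_nu D L \<nu> i) * (\<integral>x. (p i x)\<^sup>2 \<partial>\<nu>))"
      using Qhh0 Qhh unfolding Q_def by auto
    have ipfg: "ip fk g = ip h g"
    proof -
      have "ip fk g = ip (\<lambda>x. h x + P x) g" by (simp only: fk_eq[symmetric])
      also have "\<dots> = ip h g + ip P g" by (rule bil_add_left[OF bil_ip hH PH gH])
      finally show ?thesis using ipPg[OF gV] by simp
    qed
    have Enfg: "En fk g = En h g"
    proof -
      have "En fk g = En (\<lambda>x. h x + P x) g" by (simp only: fk_eq[symmetric])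
      also have "\<dots> = En h g + En P g" by (rule bil_add_left[OF bil_En hH PH gH])
      finally show ?thesis using EnPg[OF gV] by simp
    qed
    have "(\<integral>x. lam * fk x * g x - Gam L fk g x \<partial>\<nu>) = (\<integral>x. lam * (fk x * g x) - Gam L fk g x \<partial>\<nu>)"
      by (simp add: mult.assoc)
    also have "\<dots> = lam * ip fk g - En fk g"
      using H_prod[OF fkH gH] H_Gam[OF fkH gH] by simp
    finally have lhs: "(\<integral>x. lam * fk x * g x - Gam L fk g x \<partial>\<nu>) = - Q h g"
      unfolding Q_def ipfg Enfg by simp
    have "\<bar>\<integral>x. lam * fk x * g x - Gam L fk g x \<partial>\<nu>\<bar> = sqrt ((Q h g)\<^sup>2)" unfolding lhs by simp
    also have "\<dots> \<le> sqrt (Q h h * Q g g)" using cs by (rule real_sqrt_le_mono)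
    also have "\<dots> = sqrt (Q h h) * sqrt (Q g g)" by (simp add: real_sqrt_mult)
    also have "\<dots> \<le> sqrt (lam\<mu> k - lam + (\<Sum>i\<in>{1..<k}. (lam - lam_nu D L \<nu> i) * (\<integral>x. (p i x)\<^sup>2 \<partial>\<nu>)))
        * sqrt (\<integral>x. Gam L g g x \<partial>\<nu>)"
      using Qhh' Qgg_le Qgg0 by (intro mult_mono real_sqrt_le_mono) auto
    finally show ?thesis .
  qed
  show ?thesis using main unfolding V_def E_def lam_def by blast
qed

end
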